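(* Let $G=(V,E)$ be a locally finite, connected, infinite graph and fix $x\in V$. Then $p''_{\mathrm{cut,E}}\le p''_{\mathrm{cut,V}}$.
   Context: Consider Bernoulli$(p)$ bond percolation on $G$ (each edge open independently with probability $p$), with law $\mathbb{P}_p$. For $K\subset V$: the outer vertex boundary is $\partial_V K=\{z\notin K:\exists y\in K,\ y\sim z\}$ and the edge boundary is $\Delta K=\{(y,z)\in E:y\in K,z\notin K\}$. Let $\mathscr{B}_E=\{\Delta S: S\text{ is the vertex set of a finite connected subgraph containing }x\}$ and $\mathscr{B}_V=\{\partial_V S: S\text{ is the vertex set of a finite connected subgraph containing }x\}$. For $\Pi\in\mathscr{B}_V$ and $v\in\Pi$, $A(x,v,\Pi)$ is the event that $x$ is connected to $v$ by an open path using no vertex of $\Pi\setminus\{v\}$; for $\Pi_E\in\mathscr{B}_E$ and $e\in\Pi_E$, $A(x,e,\Pi_E)$ is the event that $e$ is open and $x$ is connected to $e$ by an open path using no edge of $\Pi_E\setminus\{e\}$. Define $p''_{\mathrm{cut,V}}=\sup\{p\ge0:\inf_{\Pi\in\mathscr{B}_V}\sum_{v\in\Pi}\mathbb{P}_p[A(x,v,\Pi)]=0\}$ and $p''_{\mathrm{cut,E}}=\sup\{p\ge0:\inf_{\Pi_E\in\mathscr{B}_E}\sum_{e\in\Pi_E}\mathbb{P}_p[A(x,e,\Pi_E)]=0\}$. *)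

theory Defs
  imports "HOL-Probability.Probability"
begin

text \<open>Graph: vertex set = UNIV of type 'a, adjacency relation adj (simple undirected graph).
  Undirected edges are represented as two-element sets {u,v}.\<close>

definition edges :: "('a \<Rightarrow> 'a \<Rightarrow> bool) \<Rightarrow> 'a set set" where
  "edges adj = {{u, v} | u v. adj u v}"

definition locally_finite :: "('a \<Rightarrow> 'a \<Rightarrow> bool) \<Rightarrow> bool" where
  "locally_finite adj \<longleftrightarrow> (\<forall>x. finite {y. adj x y})"

definition graph_connected :: "('a \<Rightarrow> 'a \<Rightarrow> bool) \<Rightarrow> bool" where
  "graph_connected adj \<longleftrightarrow> (\<forall>u v. adj\<^sup>*\<^sup>* u v)"

definition connected_vset :: "('a \<Rightarrow> 'a \<Rightarrow> bool) \<Rightarrow> 'a set \<Rightarrow> bool" where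
  "connected_vset adj S \<longleftrightarrow>
     (\<forall>u\<in>S. \<forall>v\<in>S. (\<lambda>a b. adj a b \<and> a \<in> S \<and> b \<in> S)\<^sup>*\<^sup>* u v)"

definition perc :: "('a \<Rightarrow> 'a \<Rightarrow> bool) \<Rightarrow> real \<Rightarrow> ('a set \<Rightarrow> bool) measure" where
  "perc adj p = PiM (edges adj) (\<lambda>_. measure_pmf (bernoulli_pmf p))"

definition Prob_p :: "('a \<Rightarrow> 'a \<Rightarrow> bool) \<Rightarrow> real \<Rightarrow> (('a set \<Rightarrow> bool) \<Rightarrow> bool) \<Rightarrow> real" where
  "Prob_p adj p A = measure (perc adj p) {\<omega> \<in> space (perc adj p). A \<omega>}"

definition outer_vboundary :: "('a \<Rightarrow> 'a \<Rightarrow> bool) \<Rightarrow> 'a set \<Rightarrow> 'a set" where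
  "outer_vboundary adj K = {z. z \<notin> K \<and> (\<exists>y\<in>K. adj y z)}"

definition edge_boundary :: "('a \<Rightarrow> 'a \<Rightarrow> bool) \<Rightarrow> 'a set \<Rightarrow> 'a set set" where
  "edge_boundary adj K = {{y, z} | y z. adj y z \<and> y \<in> K \<and> z \<notin> K}"

definition finite_conn_sets :: "('a \<Rightarrow> 'a \<Rightarrow> bool) \<Rightarrow> 'a \<Rightarrow> 'a set set" where
  "finite_conn_sets adj x = {S. finite S \<and> x \<in> S \<and> connected_vset adj S}"

definition cutsets_E :: "('a \<Rightarrow> 'a \<Rightarrow> bool) \<Rightarrow> 'a \<Rightarrow> 'a set set set" where
  "cutsets_E adj x = edge_boundary adj ` finite_conn_sets adj x"

definition cutsets_V :: "('a \<Rightarrow> 'a \<Rightarrow> bool) \<Rightarrow> 'a \<Rightarrow> 'a set set" where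
  "cutsets_V adj x = outer_vboundary adj ` finite_conn_sets adj x"

definition open_conn_avoid_V ::
  "('a \<Rightarrow> 'a \<Rightarrow> bool) \<Rightarrow> ('a set \<Rightarrow> bool) \<Rightarrow> 'a set \<Rightarrow> 'a \<Rightarrow> 'a \<Rightarrow> bool" where
  "open_conn_avoid_V adj \<omega> W a b \<longleftrightarrow> a \<notin> W \<and>
     (\<lambda>u w. adj u w \<and> \<omega> {u, w} \<and> u \<notin> W \<and> w \<notin> W)\<^sup>*\<^sup>* a b"

definition open_conn_avoid_E ::
  "('a \<Rightarrow> 'a \<Rightarrow> bool) \<Rightarrow> ('a set \<Rightarrow> bool) \<Rightarrow> 'a set set \<Rightarrow> 'a \<Rightarrow> 'a \<Rightarrow> bool" where
  "open_conn_avoid_E adj \<omega> F a b \<longleftrightarrow>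
     (\<lambda>u w. adj u w \<and> \<omega> {u, w} \<and> {u, w} \<notin> F)\<^sup>*\<^sup>* a b"

definition A_V :: "('a \<Rightarrow> 'a \<Rightarrow> bool) \<Rightarrow> 'a \<Rightarrow> 'a \<Rightarrow> 'a set \<Rightarrow> ('a set \<Rightarrow> bool) \<Rightarrow> bool" where
  "A_V adj x v CV \<omega> \<longleftrightarrow> open_conn_avoid_V adj \<omega> (CV - {v}) x v"

definition A_E :: "('a \<Rightarrow> 'a \<Rightarrow> bool) \<Rightarrow> 'a \<Rightarrow> 'a set \<Rightarrow> 'a set set \<Rightarrow> ('a set \<Rightarrow> bool) \<Rightarrow> bool" where
  "A_E adj x e CE \<omega> \<longleftrightarrow> \<omega> e \<and> (\<exists>y\<in>e. open_conn_avoid_E adj \<omega> (CE - {e}) x y)"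

definition p_cut_V :: "('a \<Rightarrow> 'a \<Rightarrow> bool) \<Rightarrow> 'a \<Rightarrow> real" where
  "p_cut_V adj x = Sup {p. p \<ge> 0 \<and>
      (INF CV\<in>cutsets_V adj x. \<Sum>v\<in>CV. Prob_p adj p (A_V adj x v CV)) = 0}"

definition p_cut_E :: "('a \<Rightarrow> 'a \<Rightarrow> bool) \<Rightarrow> 'a \<Rightarrow> real" where
  "p_cut_E adj x = Sup {p. p \<ge> 0 \<and>
      (INF CE\<in>cutsets_E adj x. \<Sum>e\<in>CE. Prob_p adj p (A_E adj x e CE)) = 0}"

end

theory Submission
  imports Defs
begin

lemma perc_prob: "prob_space (perc adj p)"
  unfolding perc_def by (intro prob_space_PiM prob_space_measure_pmf)

lemma sets_open_edge:
  assumes "e \<in> edges adj"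
  shows "{\<omega> \<in> space (perc adj p). \<omega> e} \<in> sets (perc adj p)"
proof -
  have m: "(\<lambda>\<omega>. \<omega> e) \<in> measurable (perc adj p) (measure_pmf (bernoulli_pmf p))"
    unfolding perc_def using assms by (rule measurable_component_singleton)
  have "(\<lambda>\<omega>. \<omega> e) -` {True} \<inter> space (perc adj p) \<in> sets (perc adj p)"
    using measurable_sets[OF m, of "{True}"] by simp
  moreover have "(\<lambda>\<omega>. \<omega> e) -` {True} \<inter> space (perc adj p) = {\<omega> \<in> space (perc adj p). \<omega> e}"
    by auto
  ultimately show ?thesis by simp
qed

lemma sets_relpow:
  assumes lf: "locally_finite adj" and sy: "\<And>u v. adj u v \<Longrightarrow> adj v u"
  shows "{\<omega> \<in> space (perc adj p). ((\<lambda>u w. adj u w \<and> \<omega> {u, w} \<and> Q u w) ^^ n) a b} \<in> sets (perc adj p)"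
proof (induction n arbitrary: b)
  case 0
  show ?case by (cases "a = b") auto
next
  case (Suc n)
  let ?R = "\<lambda>\<omega> u w. adj u w \<and> \<omega> {u, w} \<and> Q u w"
  have eq: "{\<omega> \<in> space (perc adj p). (?R \<omega> ^^ Suc n) a b} =
    (\<Union>y\<in>{y. adj y b \<and> Q y b}. {\<omega> \<in> space (perc adj p). (?R \<omega> ^^ n) a y} \<inter> {\<omega> \<in> space (perc adj p). \<omega> {y, b}})"
    by (auto simp: relpowp_Suc_right)
  have fin: "finite {y. adj y b \<and> Q y b}"
  proof -
    have "finite {y. adj b y}" using lf unfolding locally_finite_def by blast
    moreover have "{y. adj y b \<and> Q y b} \<subseteq> {y. adj b y}" using sy by auto
    ultimately show ?thesis by (rule finite_subset[rotated])
  qed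
  have "{\<omega> \<in> space (perc adj p). \<omega> {y, b}} \<in> sets (perc adj p)" if "adj y b" for y
    using that by (intro sets_open_edge) (auto simp: edges_def)
  then show ?case unfolding eq using fin Suc.IH
    by (intro sets.finite_UN) auto
qed

lemma sets_rtranclp:
  assumes lf: "locally_finite adj" and sy: "\<And>u v. adj u v \<Longrightarrow> adj v u"
  shows "{\<omega> \<in> space (perc adj p). ((\<lambda>u w. adj u w \<and> \<omega> {u, w} \<and> Q u w)\<^sup>*\<^sup>*) a b} \<in> sets (perc adj p)"
proof -
  have "{\<omega> \<in> space (perc adj p). ((\<lambda>u w. adj u w \<and> \<omega> {u, w} \<and> Q u w)\<^sup>*\<^sup>*) a b} =
     (\<Union>n. {\<omega> \<in> space (perc adj p). ((\<lambda>u w. adj u w \<and> \<omega> {u, w} \<and> Q u w) ^^ n) a b})"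
    by (auto dest: rtranclp_imp_relpowp intro: relpowp_imp_rtranclp)
  then show ?thesis using sets_relpow[OF lf sy] by (simp add: sets.countable_UN)
qed


interpretation pmf_as_function .

lemma bern_False_0: "1 \<le> p \<Longrightarrow> pmf (bernoulli_pmf p) False = 0"
  by transfer simp

lemma bern_True_0: "pmf (bernoulli_pmf 0) True = 0"
  by simp

lemma AE_open:
  assumes "1 \<le> p" "e \<in> edges adj"
  shows "AE \<omega> in perc adj p. \<omega> e"
  unfolding perc_def
proof (rule AE_PiM_component[where P="\<lambda>b. b"])
  show "AE b in measure_pmf (bernoulli_pmf p). b"
    unfolding AE_measure_pmf_iff
  proof
    fix y assume "y \<in> set_pmf (bernoulli_pmf p)"
    then show y using bern_False_0[OF assms(1)] by (cases y) (auto simp: set_pmf_iff)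
  qed
qed (use assms in \<open>auto intro: prob_space_measure_pmf\<close>)

lemma AE_closed:
  assumes "e \<in> edges adj"
  shows "AE \<omega> in perc adj 0. \<not> \<omega> e"
  unfolding perc_def
proof (rule AE_PiM_component[where P="\<lambda>b. \<not> b"])
  show "AE b in measure_pmf (bernoulli_pmf 0). \<not> b"
    unfolding AE_measure_pmf_iff
  proof
    fix y assume "y \<in> set_pmf (bernoulli_pmf 0)"
    then show "\<not> y" using bern_True_0 by (cases y) (auto simp: set_pmf_iff)
  qed
qed (use assms in \<open>auto intro: prob_space_measure_pmf\<close>)

lemma AE_path:
  assumes "1 \<le> p" "(\<lambda>u w. adj u w \<and> Q u w)\<^sup>*\<^sup>* a b"
  shows "AE \<omega> in perc adj p. (\<lambda>u w. adj u w \<and> \<omega> {u, w} \<and> Q u w)\<^sup>*\<^sup>* a b"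
  using assms(2)
proof (induction rule: rtranclp_induct)
  case base
  then show ?case by simp
next
  case (step b c)
  have "AE \<omega> in perc adj p. \<omega> {b, c}"
    using step.hyps(2) by (intro AE_open[OF assms(1)]) (auto simp: edges_def)
  with step.IH show ?case
    by eventually_elim (use step.hyps(2) in \<open>auto intro: rtranclp.rtrancl_into_rtrancl\<close>)
qed

lemma sets_A_V:
  assumes lf: "locally_finite adj" and sy: "\<And>u v. adj u v \<Longrightarrow> adj v u"
  shows "{\<omega> \<in> space (perc adj p). A_V adj x v W \<omega>} \<in> sets (perc adj p)"
proof (cases "x \<in> W - {v}")
  case True
  then show ?thesis by (simp add: A_V_def open_conn_avoid_V_def)
next
  case False
  then show ?thesis unfolding A_V_def open_conn_avoid_V_def
    using sets_rtranclp[OF lf sy, of p "\<lambda>u w. u \<notin> W - {v} \<and> w \<notin> W - {v}" x v]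
    by simp
qed

lemma sets_A_E:
  assumes lf: "locally_finite adj" and sy: "\<And>u v. adj u v \<Longrightarrow> adj v u"
    and e: "e \<in> edges adj"
  shows "{\<omega> \<in> space (perc adj p). A_E adj x e F \<omega>} \<in> sets (perc adj p)"
proof -
  obtain a b where ab: "e = {a, b}" using e by (auto simp: edges_def)
  have eq: "{\<omega> \<in> space (perc adj p). A_E adj x e F \<omega>} =
    {\<omega> \<in> space (perc adj p). \<omega> e} \<inter> (\<Union>y\<in>{a,b}.
      {\<omega> \<in> space (perc adj p). ((\<lambda>u w. adj u w \<and> \<omega> {u, w} \<and> {u, w} \<notin> F - {e})\<^sup>*\<^sup>*) x y})"
    by (auto simp: A_E_def open_conn_avoid_E_def ab)
  show ?thesis unfolding eq
    by (intro sets.Int sets_open_edge e sets.finite_UN sets_rtranclp[OF lf sy]) auto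
qed


lemma A_V_sub_A_E:
  assumes xS: "x \<in> S" and v: "v \<in> outer_vboundary adj S"
    and A: "A_V adj x v (outer_vboundary adj S) \<omega>"
  shows "\<exists>e\<in>edge_boundary adj S. v \<in> e \<and> A_E adj x e (edge_boundary adj S) \<omega>"
proof -
  let ?W = "outer_vboundary adj S - {v}"
  let ?R = "\<lambda>u w. adj u w \<and> \<omega> {u, w} \<and> u \<notin> ?W \<and> w \<notin> ?W"
  let ?RS = "\<lambda>u w. adj u w \<and> \<omega> {u, w} \<and> u \<in> S \<and> w \<in> S"
  have path: "?R\<^sup>*\<^sup>* x v" using A by (simp add: A_V_def open_conn_avoid_V_def)
  have inv: "(b \<in> S \<and> ?RS\<^sup>*\<^sup>* x b) \<or> (\<exists>y\<in>S. adj y v \<and> \<omega> {y, v} \<and> ?RS\<^sup>*\<^sup>* x y)"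
    if "?R\<^sup>*\<^sup>* x b" for b
    using that
  proof (induction rule: rtranclp_induct)
    case base
    then show ?case using xS by simp
  next
    case (step b c)
    show ?case
    proof (cases "b \<in> S \<and> ?RS\<^sup>*\<^sup>* x b")
      case True
      show ?thesis
      proof (cases "c \<in> S")
        case True
        then show ?thesis using \<open>b \<in> S \<and> ?RS\<^sup>*\<^sup>* x b\<close> step.hyps(2)
          by (auto intro: rtranclp.rtrancl_into_rtrancl)
      next
        case False
        then have "c \<in> outer_vboundary adj S" using True step.hyps(2)
          by (auto simp: outer_vboundary_def)
        then have "c = v" using step.hyps(2) by auto
        then show ?thesis using True step.hyps(2) by auto
      qed
    next
      case False
      then show ?thesis using step.IH by blast
    qed
  qed
  have vS: "v \<notin> S" using v by (auto simp: outer_vboundary_def)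
  from inv[OF path] vS obtain y where y: "y \<in> S" "adj y v" "\<omega> {y, v}" "?RS\<^sup>*\<^sup>* x y" by blast
  let ?e = "{y, v}"
  have e: "?e \<in> edge_boundary adj S" using y vS by (auto simp: edge_boundary_def)
  have "open_conn_avoid_E adj \<omega> (edge_boundary adj S - {?e}) x y"
    unfolding open_conn_avoid_E_def
  proof (rule mono_rtranclp[rule_format, OF _ y(4)])
    fix a b assume "?RS a b"
    then show "adj a b \<and> \<omega> {a, b} \<and> {a, b} \<notin> edge_boundary adj S - {?e}"
      by (auto simp: edge_boundary_def doubleton_eq_iff)
  qed
  then show ?thesis using e y by (auto simp: A_E_def intro!: bexI[of _ ?e])
qed


lemma finite_bd:
  assumes lf: "locally_finite adj" and S: "finite S"
  shows "finite (outer_vboundary adj S)" "finite (edge_boundary adj S)"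
proof -
  have fin: "finite (SIGMA y:S. {z. adj y z})"
    using lf S by (intro finite_SigmaI) (auto simp: locally_finite_def)
  have "outer_vboundary adj S \<subseteq> snd ` (SIGMA y:S. {z. adj y z})"
    by (force simp: outer_vboundary_def)
  then show "finite (outer_vboundary adj S)" using fin finite_subset by blast
  have "edge_boundary adj S \<subseteq> (\<lambda>(y, z). {y, z}) ` (SIGMA y:S. {z. adj y z})"
    by (force simp: edge_boundary_def)
  then show "finite (edge_boundary adj S)" using fin finite_subset by blast
qed

lemma edge_boundary_edges: "edge_boundary adj S \<subseteq> edges adj"
  by (auto simp: edge_boundary_def edges_def)

lemma sumV_le_sumE:
  assumes lf: "locally_finite adj" and sy: "\<And>u v. adj u v \<Longrightarrow> adj v u"
    and S: "finite S" and xS: "x \<in> S"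
  shows "(\<Sum>v\<in>outer_vboundary adj S. Prob_p adj p (A_V adj x v (outer_vboundary adj S)))
     \<le> (\<Sum>e\<in>edge_boundary adj S. Prob_p adj p (A_E adj x e (edge_boundary adj S)))"
proof -
  interpret prob_space "perc adj p" by (rule perc_prob)
  let ?B = "outer_vboundary adj S" and ?D = "edge_boundary adj S"
  let ?f = "\<lambda>e. Prob_p adj p (A_E adj x e ?D)"
  let ?P = "\<lambda>v. {e \<in> ?D. v \<in> e}"
  have finB: "finite ?B" and finD: "finite ?D" using finite_bd[OF lf S] by auto
  have one: "Prob_p adj p (A_V adj x v ?B) \<le> sum ?f (?P v)" if v: "v \<in> ?B" for v
  proof -
    have sub: "{\<omega> \<in> space (perc adj p). A_V adj x v ?B \<omega>}
       \<subseteq> (\<Union>e\<in>?P v. {\<omega> \<in> space (perc adj p). A_E adj x e ?D \<omega>})"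
      using A_V_sub_A_E[OF xS v] by blast
    have ev: "(\<lambda>e. {\<omega> \<in> space (perc adj p). A_E adj x e ?D \<omega>}) ` ?P v \<subseteq> events"
      using sets_A_E[OF lf sy] edge_boundary_edges by blast
    have "Prob_p adj p (A_V adj x v ?B) \<le> prob (\<Union>e\<in>?P v. {\<omega> \<in> space (perc adj p). A_E adj x e ?D \<omega>})"
      unfolding Prob_p_def using sub ev finD by (intro finite_measure_mono sets.finite_UN) auto
    also have "\<dots> \<le> sum ?f (?P v)"
      unfolding Prob_p_def using ev finD by (intro finite_measure_subadditive_finite) auto
    finally show ?thesis .
  qed
  have "(\<Sum>v\<in>?B. Prob_p adj p (A_V adj x v ?B)) \<le> (\<Sum>v\<in>?B. sum ?f (?P v))"
    using one by (rule sum_mono)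
  also have "\<dots> = sum ?f (\<Union>v\<in>?B. ?P v)"
  proof (rule sum.UNION_disjoint[symmetric])
    show "finite ?B" by (rule finB)
    show "\<forall>v\<in>?B. finite (?P v)" using finD by auto
    show "\<forall>v\<in>?B. \<forall>w\<in>?B. v \<noteq> w \<longrightarrow> ?P v \<inter> ?P w = {}"
      by (auto simp: outer_vboundary_def edge_boundary_def)
  qed
  also have "(\<Union>v\<in>?B. ?P v) = ?D"
    by (auto simp: outer_vboundary_def edge_boundary_def)
  finally show ?thesis .
qed


lemma exit_edge:
  assumes S: "finite S" and xS: "x \<in> S" and inf: "infinite (UNIV :: 'a set)"
    and conn: "graph_connected adj"
  shows "\<exists>y\<in>S. \<exists>v. v \<notin> S \<and> adj y (v::'a)"
proof -
  obtain z where z: "z \<notin> S" using ex_new_if_finite[OF inf S] by blast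
  have "adj\<^sup>*\<^sup>* x z" using conn by (simp add: graph_connected_def)
  have "b \<in> S \<or> (\<exists>y\<in>S. \<exists>v. v \<notin> S \<and> adj y v)" if "adj\<^sup>*\<^sup>* x b" for b
    using that by (induction rule: rtranclp_induct) (use xS in auto)
  with \<open>adj\<^sup>*\<^sup>* x z\<close> z show ?thesis by blast
qed

lemma sumV_ge_1:
  assumes lf: "locally_finite adj" and sy: "\<And>u v. adj u v \<Longrightarrow> adj v u"
    and inf: "infinite (UNIV :: 'a set)" and conn: "graph_connected adj"
    and S: "S \<in> finite_conn_sets adj (x::'a)" and p: "1 \<le> p"
  shows "1 \<le> (\<Sum>v\<in>outer_vboundary adj S. Prob_p adj p (A_V adj x v (outer_vboundary adj S)))"
proof -
  interpret prob_space "perc adj p" by (rule perc_prob)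
  let ?B = "outer_vboundary adj S"
  have fS: "finite S" and xS: "x \<in> S" and cS: "connected_vset adj S"
    using S by (auto simp: finite_conn_sets_def)
  obtain y v where y: "y \<in> S" "v \<notin> S" "adj y v" using exit_edge[OF fS xS inf conn] by blast
  have vB: "v \<in> ?B" using y by (auto simp: outer_vboundary_def)
  let ?W = "?B - {v}"
  have "(\<lambda>a b. adj a b \<and> a \<in> S \<and> b \<in> S)\<^sup>*\<^sup>* x y" using cS xS y(1) by (simp add: connected_vset_def)
  then have "(\<lambda>u w. adj u w \<and> (u \<notin> ?W \<and> w \<notin> ?W))\<^sup>*\<^sup>* x y"
    by (rule mono_rtranclp[rule_format, rotated]) (auto simp: outer_vboundary_def)
  moreover have "y \<notin> ?W" "v \<notin> ?W" using y by (auto simp: outer_vboundary_def)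
  ultimately have "(\<lambda>u w. adj u w \<and> (u \<notin> ?W \<and> w \<notin> ?W))\<^sup>*\<^sup>* x v"
    using y(3) by (auto intro: rtranclp.rtrancl_into_rtrancl)
  from AE_path[OF p this] have "AE \<omega> in perc adj p. A_V adj x v ?B \<omega>"
    using xS by (auto simp: A_V_def open_conn_avoid_V_def outer_vboundary_def)
  then have one: "Prob_p adj p (A_V adj x v ?B) = 1"
    unfolding Prob_p_def using prob_Collect_eq_1[OF sets_A_V[OF lf sy]] by simp
  have "Prob_p adj p (A_V adj x v ?B) \<le> (\<Sum>v\<in>?B. Prob_p adj p (A_V adj x v ?B))"
    using vB finite_bd[OF lf fS] by (intro member_le_sum) (auto simp: Prob_p_def)
  then show ?thesis using one by simp
qed

lemma sumE_0:
  assumes lf: "locally_finite adj" and sy: "\<And>u v. adj u v \<Longrightarrow> adj v u"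
    and CE: "CE \<in> cutsets_E adj x"
  shows "(\<Sum>e\<in>CE. Prob_p adj 0 (A_E adj x e CE)) = 0"
proof (rule sum.neutral, rule ballI)
  interpret prob_space "perc adj 0" by (rule perc_prob)
  fix e assume e: "e \<in> CE"
  have eE: "e \<in> edges adj" using e CE edge_boundary_edges by (auto simp: cutsets_E_def)
  have "AE \<omega> in perc adj 0. \<omega> \<notin> {\<omega> \<in> space (perc adj 0). A_E adj x e CE \<omega>}"
    using AE_closed[OF eE] by eventually_elim (auto simp: A_E_def)
  then show "Prob_p adj 0 (A_E adj x e CE) = 0"
    unfolding Prob_p_def using prob_eq_0[OF sets_A_E[OF lf sy eE]] by simp
qed

theorem lemma2p10:
  fixes adj :: "'a \<Rightarrow> 'a \<Rightarrow> bool" and x :: 'a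
  assumes "\<And>u v. adj u v \<Longrightarrow> adj v u"
    and "\<And>u. \<not> adj u u"
    and "locally_finite adj"
    and "graph_connected adj"
    and "infinite (UNIV :: 'a set)"
  shows "p_cut_E adj x \<le> p_cut_V adj x"
proof -
  note sy = assms(1) and lf = assms(3) and conn = assms(4) and inf = assms(5)
  define fV where "fV p CV = (\<Sum>v\<in>CV. Prob_p adj p (A_V adj x v CV))" for p CV
  define fE where "fE p CE = (\<Sum>e\<in>CE. Prob_p adj p (A_E adj x e CE))" for p CE
  have fV0: "0 \<le> fV p CV" for p CV unfolding fV_def Prob_p_def by (intro sum_nonneg) simp
  have fE0: "0 \<le> fE p CE" for p CE unfolding fE_def Prob_p_def by (intro sum_nonneg) simp
  have x1: "{x} \<in> finite_conn_sets adj x" by (auto simp: finite_conn_sets_def connected_vset_def)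
  have neV: "cutsets_V adj x \<noteq> {}" and neE: "cutsets_E adj x \<noteq> {}"
    using x1 by (auto simp: cutsets_V_def cutsets_E_def)
  have bbV: "bdd_below (fV p ` cutsets_V adj x)" for p using fV0 by (intro bdd_belowI) auto
  let ?SE = "{p. p \<ge> 0 \<and> (INF CE\<in>cutsets_E adj x. fE p CE) = 0}"
  let ?SV = "{p. p \<ge> 0 \<and> (INF CV\<in>cutsets_V adj x. fV p CV) = 0}"
  have sub: "?SE \<subseteq> ?SV"
  proof
    fix p assume "p \<in> ?SE"
    then have p0: "p \<ge> 0" and inf0: "(INF CE\<in>cutsets_E adj x. fE p CE) = 0" by auto
    have ge: "0 \<le> (INF CV\<in>cutsets_V adj x. fV p CV)"
      using neV fV0 by (intro cINF_greatest) auto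
    have "(INF CV\<in>cutsets_V adj x. fV p CV) \<le> (INF CE\<in>cutsets_E adj x. fE p CE)"
    proof (rule cINF_greatest[OF neE])
      fix CE assume "CE \<in> cutsets_E adj x"
      then obtain S where S: "S \<in> finite_conn_sets adj x" and CE: "CE = edge_boundary adj S"
        by (auto simp: cutsets_E_def)
      have "(INF CV\<in>cutsets_V adj x. fV p CV) \<le> fV p (outer_vboundary adj S)"
        using S bbV by (intro cINF_lower) (auto simp: cutsets_V_def)
      also have "\<dots> \<le> fE p CE"
        unfolding fV_def fE_def CE using S
        by (intro sumV_le_sumE[OF lf sy]) (auto simp: finite_conn_sets_def)
      finally show "(INF CV\<in>cutsets_V adj x. fV p CV) \<le> fE p CE" .
    qed
    with ge inf0 p0 show "p \<in> ?SV" by simp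
  qed
  have zero: "0 \<in> ?SE"
  proof -
    have "(INF CE\<in>cutsets_E adj x. fE 0 CE) = (INF CE\<in>cutsets_E adj x. (0::real))"
      by (rule INF_cong) (auto simp: fE_def sumE_0[OF lf sy])
    then show ?thesis using neE by simp
  qed
  have bdd: "bdd_above ?SV"
  proof (rule bdd_aboveI)
    fix p assume "p \<in> ?SV"
    then have inf0: "(INF CV\<in>cutsets_V adj x. fV p CV) = 0" by auto
    show "p \<le> 1"
    proof (rule ccontr)
      assume "\<not> p \<le> 1"
      then have p1: "1 \<le> p" by simp
      have "1 \<le> (INF CV\<in>cutsets_V adj x. fV p CV)"
      proof (rule cINF_greatest[OF neV])
        fix CV assume "CV \<in> cutsets_V adj x"
        then obtain S where S: "S \<in> finite_conn_sets adj x" and CV: "CV = outer_vboundary adj S"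
          by (auto simp: cutsets_V_def)
        show "1 \<le> fV p CV" unfolding fV_def CV by (rule sumV_ge_1[OF lf sy inf conn S p1])
      qed
      with inf0 show False by simp
    qed
  qed
  have "Sup ?SE \<le> Sup ?SV"
    using zero bdd sub by (intro cSup_subset_mono) auto
  then show ?thesis unfolding p_cut_E_def p_cut_V_def fE_def fV_def .
qed

end
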